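(* Let $X_1,\dots,X_n$ be features and $Y$ a target that is not a.s. constant, $\mathcal{F}=\{1,\dots,n\}$, and $i\in\mathcal{F}$. Then $\mathrm{FI}(i)=0$ if and only if $\mathrm{Dep}(S\cup\{i\},Y)=\mathrm{Dep}(S,Y)$ for all $S\subseteq\mathcal{F}\setminus\{i\}$.
   Context: All random variables are discrete with finite support and defined on a common probability space. For discrete random variables (or random vectors) $X$ and $Y$, define $$\mathrm{UD}(X,Y):=\sum_x p_X(x)\sum_y \bigl|p_{Y\mid X=x}(y)-p_Y(y)\bigr|,$$ and, when $Y$ is not almost surely constant, $\mathrm{Dep}(X,Y):=\mathrm{UD}(X,Y)/\mathrm{UD}(Y,Y)$. Given features $X_1,\dots,X_n$ with index set $\mathcal{F}=\{1,\dots,n\}$ and $S\subseteq\mathcal{F}$, write $X_S=(X_i)_{i\in S}$ ($X_\emptyset$ constant) and $\mathrm{Dep}(S,Y):=\mathrm{Dep}(X_S,Y)$. The Berkelmans–Pries feature importance is $$\mathrm{FI}(i):=\sum_{S\subseteq\mathcal{F}\setminus\{i\}}\frac{|S|!\,(n-|S|-1)!}{n!}\bigl(\mathrm{Dep}(S\cup\{i\},Y)-\mathrm{Dep}(S,Y)\bigr).$$ *)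

theory Defs
  imports "HOL-Probability.Probability"
begin

text \<open>Random variables are functions on the sample space of a probability mass
function M (a discrete probability space). Probabilities of events are
measure_pmf.prob M.\<close>

definition Pr :: "'w pmf \<Rightarrow> ('w \<Rightarrow> bool) \<Rightarrow> real" where
  "Pr M P = measure_pmf.prob M {w. P w}"

definition UD :: "'w pmf \<Rightarrow> ('w \<Rightarrow> 'a) \<Rightarrow> ('w \<Rightarrow> 'b) \<Rightarrow> real" where
  "UD M A B = (\<Sum>x\<in>A ` set_pmf M. Pr M (\<lambda>w. A w = x) *
      (\<Sum>y\<in>B ` set_pmf M.
         \<bar>Pr M (\<lambda>w. A w = x \<and> B w = y) / Pr M (\<lambda>w. A w = x) - Pr M (\<lambda>w. B w = y)\<bar>))"

definition Dep :: "'w pmf \<Rightarrow> ('w \<Rightarrow> 'a) \<Rightarrow> ('w \<Rightarrow> 'b) \<Rightarrow> real" where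
  "Dep M A B = UD M A B / UD M B B"

definition featvec :: "(nat \<Rightarrow> 'w \<Rightarrow> 'v) \<Rightarrow> nat set \<Rightarrow> 'w \<Rightarrow> (nat \<Rightarrow> 'v)" where
  "featvec X S = (\<lambda>w. restrict (\<lambda>i. X i w) S)"

definition DepS :: "'w pmf \<Rightarrow> (nat \<Rightarrow> 'w \<Rightarrow> 'v) \<Rightarrow> nat set \<Rightarrow> ('w \<Rightarrow> 'y) \<Rightarrow> real" where
  "DepS M X S Y = Dep M (featvec X S) Y"

definition FI :: "'w pmf \<Rightarrow> nat \<Rightarrow> (nat \<Rightarrow> 'w \<Rightarrow> 'v) \<Rightarrow> ('w \<Rightarrow> 'y) \<Rightarrow> nat \<Rightarrow> real" where
  "FI M n X Y i = (\<Sum>S\<in>Pow ({1..n} - {i}).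
      (fact (card S) * fact (n - card S - 1) / fact n) *
      (DepS M X (S \<union> {i}) Y - DepS M X S Y))"

end

theory Submission imports Defs begin

lemma Pr_split:
  assumes fin: "finite (B ` set_pmf M)"
  shows "Pr M (\<lambda>w. f (B w) = x \<and> P w) =
         (\<Sum>b\<in>{b\<in>B ` set_pmf M. f b = x}. Pr M (\<lambda>w. B w = b \<and> P w))"
proof -
  let ?S = "set_pmf M"
  have eq: "{w. f (B w) = x \<and> P w} \<inter> ?S = (\<Union>b\<in>{b\<in>B ` ?S. f b = x}. {w. B w = b \<and> P w} \<inter> ?S)"
    by auto
  have "Pr M (\<lambda>w. f (B w) = x \<and> P w) = measure_pmf.prob M ({w. f (B w) = x \<and> P w} \<inter> ?S)"
    unfolding Pr_def by (simp add: measure_Int_set_pmf)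
  also have "\<dots> = (\<Sum>b\<in>{b\<in>B ` ?S. f b = x}. measure_pmf.prob M ({w. B w = b \<and> P w} \<inter> ?S))"
    unfolding eq
    by (rule measure_pmf.finite_measure_finite_Union) (use fin in \<open>auto simp: disjoint_family_on_def\<close>)
  also have "\<dots> = (\<Sum>b\<in>{b\<in>B ` set_pmf M. f b = x}. Pr M (\<lambda>w. B w = b \<and> P w))"
    unfolding Pr_def by (simp add: measure_Int_set_pmf)
  finally show ?thesis .
qed

lemma aux: "(p::real) > 0 \<Longrightarrow> p * \<bar>a / p - b\<bar> = \<bar>a - p * b\<bar>"
proof -
  assume p: "p > 0"
  have "p * \<bar>a / p - b\<bar> = \<bar>p * (a / p - b)\<bar>" using p by (simp add: abs_mult)
  also have "p * (a / p - b) = a - p * b" using p by (simp add: right_diff_distrib)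
  finally show ?thesis .
qed

lemma UD_alt:
  "UD M A Y = (\<Sum>x\<in>A ` set_pmf M. \<Sum>y\<in>Y ` set_pmf M.
      \<bar>Pr M (\<lambda>w. A w = x \<and> Y w = y) - Pr M (\<lambda>w. A w = x) * Pr M (\<lambda>w. Y w = y)\<bar>)"
  unfolding UD_def
proof (rule sum.cong[OF refl])
  fix x assume "x \<in> A ` set_pmf M"
  then obtain w0 where w0: "w0 \<in> set_pmf M" "x = A w0" by auto
  have pos: "Pr M (\<lambda>w. A w = x) > 0" unfolding Pr_def
    by (rule measure_pmf_posI[OF w0(1)]) (simp add: w0)
  show "Pr M (\<lambda>w. A w = x) * (\<Sum>y\<in>Y ` set_pmf M. \<bar>Pr M (\<lambda>w. A w = x \<and> Y w = y) / Pr M (\<lambda>w. A w = x) - Pr M (\<lambda>w. Y w = y)\<bar>)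
     = (\<Sum>y\<in>Y ` set_pmf M. \<bar>Pr M (\<lambda>w. A w = x \<and> Y w = y) - Pr M (\<lambda>w. A w = x) * Pr M (\<lambda>w. Y w = y)\<bar>)"
    unfolding sum_distrib_left by (intro sum.cong refl aux[OF pos])
qed

lemma UD_mono:
  assumes finB: "finite (B ` set_pmf M)" and finY: "finite (Y ` set_pmf M)"
  shows "UD M (\<lambda>w. f (B w)) Y \<le> UD M B Y"
proof -
  let ?S = "set_pmf M"
  let ?g = "\<lambda>b y. Pr M (\<lambda>w. B w = b \<and> Y w = y) - Pr M (\<lambda>w. B w = b) * Pr M (\<lambda>w. Y w = y)"
  have img: "(\<lambda>w. f (B w)) ` ?S = f ` (B ` ?S)" by auto
  have key: "Pr M (\<lambda>w. f (B w) = x \<and> Y w = y) - Pr M (\<lambda>w. f (B w) = x) * Pr M (\<lambda>w. Y w = y)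
      = (\<Sum>b\<in>{b\<in>B ` ?S. f b = x}. ?g b y)" for x y
  proof -
    have a: "Pr M (\<lambda>w. f (B w) = x) = (\<Sum>b\<in>{b\<in>B ` ?S. f b = x}. Pr M (\<lambda>w. B w = b))"
      using Pr_split[OF finB, of f x "\<lambda>_. True"] by simp
    show ?thesis unfolding Pr_split[OF finB, of f x "\<lambda>w. Y w = y"] a
      by (simp add: sum_subtractf sum_distrib_right)
  qed
  have "UD M (\<lambda>w. f (B w)) Y = (\<Sum>x\<in>f ` (B ` ?S). \<Sum>y\<in>Y ` ?S. \<bar>\<Sum>b\<in>{b\<in>B ` ?S. f b = x}. ?g b y\<bar>)"
    unfolding UD_alt img key ..
  also have "\<dots> \<le> (\<Sum>x\<in>f ` (B ` ?S). \<Sum>y\<in>Y ` ?S. \<Sum>b\<in>{b\<in>B ` ?S. f b = x}. \<bar>?g b y\<bar>)"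
    by (intro sum_mono sum_abs)
  also have "\<dots> = (\<Sum>x\<in>f ` (B ` ?S). \<Sum>b\<in>{b\<in>B ` ?S. f b = x}. \<Sum>y\<in>Y ` ?S. \<bar>?g b y\<bar>)"
    by (intro sum.cong refl sum.swap)
  also have "\<dots> = (\<Sum>b\<in>B ` ?S. \<Sum>y\<in>Y ` ?S. \<bar>?g b y\<bar>)"
    by (rule sum.group) (use finB in auto)
  also have "\<dots> = UD M B Y" unfolding UD_alt ..
  finally show ?thesis .
qed

lemma UD_nonneg: "UD M A B \<ge> 0"
  unfolding UD_def Pr_def by (intro sum_nonneg mult_nonneg_nonneg) auto

theorem mainTheorem6:
  fixes M :: "'w pmf" and X :: "nat \<Rightarrow> 'w \<Rightarrow> 'v" and Y :: "'w \<Rightarrow> 'y"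
    and n i :: nat
  assumes "\<And>j. j \<in> {1..n} \<Longrightarrow> finite (X j ` set_pmf M)"
    and "finite (Y ` set_pmf M)"
    and "\<not> (\<exists>c. \<forall>w\<in>set_pmf M. Y w = c)"
    and "i \<in> {1..n}"
  shows "FI M n X Y i = 0 \<longleftrightarrow>
         (\<forall>S. S \<subseteq> {1..n} - {i} \<longrightarrow> DepS M X (S \<union> {i}) Y = DepS M X S Y)"
proof -
  have mono: "DepS M X S Y \<le> DepS M X (S \<union> {i}) Y" if S: "S \<subseteq> {1..n} - {i}" for S
  proof -
    have fe: "featvec X S = (\<lambda>w. restrict (featvec X (S \<union> {i}) w) S)"
      by (intro ext) (simp add: featvec_def restrict_def)
    have sub: "featvec X (S \<union> {i}) ` set_pmf M \<subseteq> PiE (S \<union> {i}) (\<lambda>j. X j ` set_pmf M)"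
      unfolding featvec_def by (rule image_subsetI, rule PiE_I) auto
    have "finite (PiE (S \<union> {i}) (\<lambda>j. X j ` set_pmf M))"
      using S assms(1,4) by (intro finite_PiE) (auto intro: finite_subset)
    hence fin: "finite (featvec X (S \<union> {i}) ` set_pmf M)" using sub finite_subset by blast
    have "UD M (featvec X S) Y \<le> UD M (featvec X (S \<union> {i})) Y"
      unfolding fe by (rule UD_mono[OF fin assms(2)])
    thus ?thesis unfolding DepS_def Dep_def by (intro divide_right_mono UD_nonneg)
  qed
  define w where "w S = (fact (card S) * fact (n - card S - 1) / fact n :: real)" for S :: "nat set"
  have wpos: "w S > 0" for S unfolding w_def by simp
  have FIe: "FI M n X Y i = (\<Sum>S\<in>Pow ({1..n} - {i}). w S * (DepS M X (S \<union> {i}) Y - DepS M X S Y))"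
    unfolding FI_def w_def ..
  have nn: "\<forall>S\<in>Pow ({1..n} - {i}). 0 \<le> w S * (DepS M X (S \<union> {i}) Y - DepS M X S Y)"
  proof
    fix S assume "S \<in> Pow ({1..n} - {i})"
    hence S: "S \<subseteq> {1..n} - {i}" by simp
    have "0 \<le> DepS M X (S \<union> {i}) Y - DepS M X S Y" using mono[OF S] by simp
    moreover have "0 \<le> w S" using wpos[of S] by simp
    ultimately show "0 \<le> w S * (DepS M X (S \<union> {i}) Y - DepS M X S Y)" by simp
  qed
  have "FI M n X Y i = 0 \<longleftrightarrow> (\<forall>S\<in>Pow ({1..n} - {i}). w S * (DepS M X (S \<union> {i}) Y - DepS M X S Y) = 0)"
    unfolding FIe by (rule sum_nonneg_eq_0_iff[OF _ bspec[OF nn]]) simp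
  also have "\<dots> \<longleftrightarrow> (\<forall>S. S \<subseteq> {1..n} - {i} \<longrightarrow> DepS M X (S \<union> {i}) Y = DepS M X S Y)"
  proof -
    have nz: "w S \<noteq> 0" for S using wpos[of S] by linarith
    show ?thesis using nz by (simp add: Pow_def)
  qed
  finally show ?thesis .
qed

end
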